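(* Let $\mathbf{x}_k\in\mathbb{R}^d$, $\sigma_k>0$, $\epsilon>0$. Suppose the sampled estimates $\mathbf{g}_k,\mathbf{B}_k,\mathbf{T}_k$ at $\mathbf{x}_k$ satisfy the sampling condition with accuracy $\epsilon$ and constants $\kappa_g=\frac14,\kappa_b=\frac14,\kappa_t=\frac12$, and set $\epsilon_2:=\epsilon^{2/3}$. Let $\mathbf{s}_k$ satisfy the approximate minimization condition with constant $\theta>0$. Then $$\|\mathbf{s}_k\|\ge\kappa_{k,2}^{-1/2}\left(\chi_{f,2}(\mathbf{x}_k+\mathbf{s}_k)-\tfrac12\epsilon_2\right)^{1/2},\qquad\kappa_{k,2}=3\sigma_k+\frac{L_t}{2}+\theta+\frac14,$$ where the right-hand side is read as $0$ when $\chi_{f,2}(\mathbf{x}_k+\mathbf{s}_k)<\frac12\epsilon_2$.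
   Context: $f(\mathbf{x})=\frac1n\sum_{i=1}^n f_i(\mathbf{x})$, each $f_i\in C^3(\mathbb{R}^d,\mathbb{R})$ with $f_i,\nabla f_i,\nabla^2 f_i,\nabla^3 f_i$ Lipschitz with constants $L_f,L_g,L_b,L_t$ (Euclidean norm on vectors; on $p$-th order tensors $\|A\|_{[p]}=\max_{\|\mathbf{h}_1\|=\dots=\|\mathbf{h}_p\|=1}|A[\mathbf{h}_1,\dots,\mathbf{h}_p]|$). For a third-order tensor $T$: $T[\mathbf{s}]^2=(\sum_{j,k}T_{ijk}s_js_k)_i$, $T[\mathbf{s}]^3=\sum_{i,j,k}T_{ijk}s_is_js_k$. Sampled estimates: $\mathbf{g}_k=\frac{1}{|\mathcal{S}^g|}\sum_{i\in\mathcal{S}^g}\nabla f_i(\mathbf{x}_k)$, $\mathbf{B}_k=\frac{1}{|\mathcal{S}^b|}\sum_{i\in\mathcal{S}^b}\nabla^2 f_i(\mathbf{x}_k)$, $\mathbf{T}_k=\frac{1}{|\mathcal{S}^t|}\sum_{i\in\mathcal{S}^t}\nabla^3 f_i(\mathbf{x}_k)$ for index sets $\mathcal{S}^g,\mathcal{S}^b,\mathcal{S}^t\subseteq\{1,\dots,n\}$. Model: $\phi_k(\mathbf{s})=f(\mathbf{x}_k)+\mathbf{g}_k^\top\mathbf{s}+\frac12\mathbf{s}^\top\mathbf{B}_k\mathbf{s}+\frac16\mathbf{T}_k[\mathbf{s}]^3$, $m_k(\mathbf{s})=\phi_k(\mathbf{s})+\frac{\sigma_k}{4}\|\mathbf{s}\|^4$.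 Sampling condition (accuracy $\epsilon$, constants $\kappa_g,\kappa_b,\kappa_t$): $\|\mathbf{g}_k-\nabla f(\mathbf{x}_k)\|\le\kappa_g\epsilon$; $\|(\mathbf{B}_k-\nabla^2 f(\mathbf{x}_k))\mathbf{s}\|\le\kappa_b\epsilon^{2/3}\|\mathbf{s}\|$ and $\|\mathbf{T}_k[\mathbf{s}]^2-\nabla^3 f(\mathbf{x}_k)[\mathbf{s}]^2\|\le\kappa_t\epsilon^{1/3}\|\mathbf{s}\|^2$ for all $\mathbf{s}\in\mathbb{R}^d$. Approximate minimization condition (constants $\theta>0,\zeta>0$): $m_k(\mathbf{s}_k)<m_k(\mathbf{0})$ and $\chi_{m,i}(\mathbf{x}_k,\mathbf{s}_k)\le\theta\|\mathbf{s}_k\|^{4-i}$, $i=1,2,3$, with $\chi_{m,1}=\|\nabla m_k(\mathbf{s})\|$, $\chi_{m,2}=\max(0,-\lambda_{min}(\nabla^2 m_k(\mathbf{s})))$, $\chi_{m,3}=\max\{|\nabla^3 m_k(\mathbf{s})[\mathbf{y}]^3|:\|\mathbf{y}\|=1,|\mathbf{y}^\top\nabla^2 m_k(\mathbf{s})\mathbf{y}|\le\zeta\}$ (empty maximum $=0$). Criticality: $\chi_{f,2}(\mathbf{x})=\max(0,-\lambda_{min}(\nabla^2 f(\mathbf{x})))$. *)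

theory Defs
  imports "HOL-Analysis.Analysis"
begin

type_synonym 'd tensor3 = "real^'d^'d^'d"

definition t3_app1 :: "'d::finite tensor3 \<Rightarrow> real^'d \<Rightarrow> real^'d^'d" where
  "t3_app1 T s = (\<chi> i j. \<Sum>k\<in>UNIV. T$i$j$k * s$k)"

definition t3_app2 :: "'d::finite tensor3 \<Rightarrow> real^'d \<Rightarrow> real^'d" where
  "t3_app2 T s = (\<chi> i. \<Sum>j\<in>UNIV. \<Sum>k\<in>UNIV. T$i$j$k * s$j * s$k)"

definition t3_app3 :: "'d::finite tensor3 \<Rightarrow> real^'d \<Rightarrow> real" where
  "t3_app3 T s = (\<Sum>i\<in>UNIV. \<Sum>j\<in>UNIV. \<Sum>k\<in>UNIV. T$i$j$k * s$i * s$j * s$k)"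

definition tnorm2 :: "real^'d^'d \<Rightarrow> real" where
  "tnorm2 A = Sup {\<bar>\<Sum>i\<in>UNIV. \<Sum>j\<in>UNIV. A$i$j * h1$i * h2$j\<bar> | h1 h2.
                    norm h1 = 1 \<and> norm h2 = 1}"

definition tnorm3 :: "('d::finite) tensor3 \<Rightarrow> real" where
  "tnorm3 T = Sup {\<bar>\<Sum>i\<in>UNIV. \<Sum>j\<in>UNIV. \<Sum>k\<in>UNIV. T$i$j$k * h1$i * h2$j * h3$k\<bar> | h1 h2 h3.
                    norm h1 = 1 \<and> norm h2 = 1 \<and> norm h3 = 1}"

definition eigenvalues :: "real^'d^'d \<Rightarrow> real set" where
  "eigenvalues A = {c. \<exists>v. v \<noteq> 0 \<and> A *v v = c *\<^sub>R v}"

definition lambda_min :: "real^'d^'d \<Rightarrow> real" where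
  "lambda_min A = Min (eigenvalues A)"

definition chi2 :: "real^'d^'d \<Rightarrow> real" where
  "chi2 A = max 0 (- lambda_min A)"

definition outer :: "real^'d \<Rightarrow> real^'d \<Rightarrow> real^'d^'d" where
  "outer u v = (\<chi> i j. u$i * v$j)"

text \<open>Cubic-regularised quartic model m_k and its derivatives (B, T symmetric).\<close>
definition model :: "real \<Rightarrow> real^'d \<Rightarrow> real^'d^'d \<Rightarrow> 'd::finite tensor3 \<Rightarrow> real \<Rightarrow> real^'d \<Rightarrow> real" where
  "model f0 g B T \<sigma> s = f0 + g \<bullet> s + (1/2) * (s \<bullet> (B *v s)) + (1/6) * t3_app3 T s
                        + (\<sigma>/4) * norm s ^ 4"

definition model_grad :: "real^'d \<Rightarrow> real^'d^'d \<Rightarrow> 'd::finite tensor3 \<Rightarrow> real \<Rightarrow> real^'d \<Rightarrow> real^'d" where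
  "model_grad g B T \<sigma> s = g + B *v s + (1/2) *\<^sub>R t3_app2 T s + (\<sigma> * norm s ^ 2) *\<^sub>R s"

definition model_hess :: "real^'d^'d \<Rightarrow> 'd::finite tensor3 \<Rightarrow> real \<Rightarrow> real^'d \<Rightarrow> real^'d^'d" where
  "model_hess B T \<sigma> s = B + t3_app1 T s + \<sigma> *\<^sub>R ((norm s ^ 2) *\<^sub>R mat 1 + 2 *\<^sub>R outer s s)"

text \<open>nabla^3 m(s)[y]^3 = T[y]^3 + 6 sigma (s.y) ||y||^2\<close>
definition model_third3 :: "'d::finite tensor3 \<Rightarrow> real \<Rightarrow> real^'d \<Rightarrow> real^'d \<Rightarrow> real" where
  "model_third3 T \<sigma> s y = t3_app3 T y + 6 * \<sigma> * (s \<bullet> y) * norm y ^ 2"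

definition chi_m1 where "chi_m1 g B T \<sigma> s = norm (model_grad g B T \<sigma> s)"
definition chi_m2 where "chi_m2 B T \<sigma> s = chi2 (model_hess B T \<sigma> s)"
definition chi_m3 :: "real^'d^'d \<Rightarrow> 'd::finite tensor3 \<Rightarrow> real \<Rightarrow> real \<Rightarrow> real^'d \<Rightarrow> real" where
  "chi_m3 B T \<sigma> \<zeta> s =
     (let S = {\<bar>model_third3 T \<sigma> s y\<bar> | y. norm y = 1 \<and>
                  \<bar>y \<bullet> (model_hess B T \<sigma> s *v y)\<bar> \<le> \<zeta>}
      in if S = {} then 0 else Sup S)"

end

theory Submission
  imports Defs
begin


lemma quad_sym:
  fixes A :: "real^'d::finite^'d"
  assumes sym: "\<And>i j. A$i$j = A$j$i"
  shows "w \<bullet> (A *v v) = v \<bullet> (A *v w)"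
proof -
  have "w \<bullet> (A *v v) = (\<Sum>i\<in>UNIV. \<Sum>j\<in>UNIV. w$i * A$i$j * v$j)"
    by (simp add: inner_vec_def matrix_vector_mult_def sum_distrib_left mult.assoc)
  also have "\<dots> = (\<Sum>j\<in>UNIV. \<Sum>i\<in>UNIV. w$i * A$i$j * v$j)" by (rule sum.swap)
  also have "\<dots> = v \<bullet> (A *v w)"
    by (simp add: inner_vec_def matrix_vector_mult_def sum_distrib_left sym mult_ac)
  finally show ?thesis .
qed



lemma lmin_sym:
  fixes A :: "real^'d::finite^'d"
  assumes sym: "\<And>i j. A$i$j = A$j$i"
  shows "\<exists>m. lambda_min A = m \<and> (\<forall>y. norm y = 1 \<longrightarrow> m \<le> y \<bullet> (A *v y))
              \<and> (\<exists>y. norm y = 1 \<and> y \<bullet> (A *v y) = m)"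
proof -
  define q where "q = (\<lambda>y::real^'d. y \<bullet> (A *v y))"
  have "continuous_on (sphere 0 1) q" unfolding q_def
    by (intro continuous_intros)
  moreover have "sphere (0::real^'d) 1 \<noteq> {}"
  proof -
    have "(axis undefined 1::real^'d) \<in> sphere 0 1" by (simp add: norm_axis_1)
    then show ?thesis by blast
  qed
  ultimately obtain v0 where v0: "v0 \<in> sphere 0 1" and v0min: "\<And>y. y \<in> sphere 0 1 \<Longrightarrow> q v0 \<le> q y"
    using continuous_attains_inf[OF compact_sphere] by blast
  define m where "m = q v0"
  have nv0: "norm v0 = 1" using v0 by simp
  have hom: "q z \<ge> m * (norm z)^2" for z
  proof (cases "z = 0")
    case True then show ?thesis by (simp add: q_def)
  next
    case False
    have "m \<le> q (z /\<^sub>R norm z)" unfolding m_def using False by (intro v0min) simp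
    also have "q (z /\<^sub>R norm z) = q z / (norm z)^2"
      by (simp add: q_def matrix_vector_mult_scaleR power2_eq_square field_simps)
    finally show ?thesis using False by (simp add: field_simps)
  qed
  define r where "r = A *v v0 - m *\<^sub>R v0"
  have a0: "w \<bullet> r = 0" for w
  proof -
    define a where "a = w \<bullet> r"
    define b where "b = q w - m * (norm w)^2"
    have b0: "b \<ge> 0" using hom[of w] by (simp add: b_def)
    have key: "2 * t * a + t^2 * b \<ge> 0" for t
    proof -
      have "q (v0 + t *\<^sub>R w) \<ge> m * (norm (v0 + t *\<^sub>R w))^2" by (rule hom)
      moreover have "q (v0 + t *\<^sub>R w) = q v0 + 2 * t * (w \<bullet> (A *v v0)) + t^2 * q w"
        using quad_sym[OF sym, of v0 w]
        by (simp add: q_def matrix_vector_right_distrib matrix_vector_mult_scaleR inner_add_left inner_add_right power2_eq_square algebra_simps)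
      moreover have "(norm (v0 + t *\<^sub>R w))^2 = 1 + 2 * t * (w \<bullet> v0) + t^2 * (norm w)^2"
      proof -
        have "(norm (v0 + t *\<^sub>R w))^2 = (v0 + t *\<^sub>R w) \<bullet> (v0 + t *\<^sub>R w)" by (simp add: power2_norm_eq_inner)
        also have "\<dots> = v0 \<bullet> v0 + 2 * t * (w \<bullet> v0) + t^2 * (w \<bullet> w)"
          by (simp add: inner_add_left inner_add_right inner_commute power2_eq_square algebra_simps)
        finally show ?thesis using nv0 by (simp add: power2_norm_eq_inner[symmetric])
      qed
      ultimately show ?thesis
        by (simp add: a_def b_def r_def m_def inner_diff_right algebra_simps)
    qed
    show ?thesis
    proof (rule ccontr)
      assume "w \<bullet> r \<noteq> 0"
      then have an: "a \<noteq> 0" by (simp add: a_def)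
      define t where "t = - a / (b + 1)"
      have bp: "b + 1 > 0" using b0 by linarith
      have e: "t * (b+1) = -a" using bp by (simp add: t_def)
      have "(2*t*a + t^2*b)*(b+1)^2 = 2*a*(t*(b+1))*(b+1) + b*(t*(b+1))^2"
        by (simp add: power2_eq_square algebra_simps)
      also have "\<dots> = - (a^2 * (b + 2))" unfolding e by (simp add: power2_eq_square algebra_simps)
      also have "\<dots> < 0"
      proof -
        have "a^2 > 0" using an by simp
        moreover have "b + 2 > 0" using b0 by linarith
        ultimately have "a^2 * (b+2) > 0" by (rule mult_pos_pos)
        then show ?thesis by linarith
      qed
      finally have "(2*t*a + t^2*b)*(b+1)^2 < 0" .
      moreover have "(b+1)^2 > 0" using bp by simp
      ultimately have "2*t*a + t^2*b < 0"
        by (simp add: mult_less_0_iff)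
      then show False using key[of t] by simp
    qed
  qed
  have r0: "r = 0" using a0[of r] by simp
  then have "A *v v0 = m *\<^sub>R v0" by (simp add: r_def)
  moreover have "v0 \<noteq> 0" using nv0 by auto
  ultimately have meig: "m \<in> eigenvalues A"
    unfolding eigenvalues_def by blast
  have ge: "c \<ge> m" if cE: "c \<in> eigenvalues A" for c
  proof -
    obtain v where v: "v \<noteq> 0" "A *v v = c *\<^sub>R v" using cE by (auto simp: eigenvalues_def)
    have h1: "m * (norm v)^2 \<le> q v" by (rule hom)
    have "q v = c * (v \<bullet> v)" by (simp add: q_def v(2))
    also have "\<dots> = c * (norm v)^2" by (simp add: power2_norm_eq_inner)
    finally have "m * (norm v)^2 \<le> c * (norm v)^2" using h1 by simp
    moreover have "(norm v)^2 > 0" using v(1) by simp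
    ultimately show ?thesis by (meson mult_right_le_imp_le)
  qed
  define ev where "ev = (\<lambda>c. SOME v. v \<noteq> 0 \<and> A *v v = c *\<^sub>R v)"
  have evp: "ev c \<noteq> 0 \<and> A *v ev c = c *\<^sub>R ev c" if "c \<in> eigenvalues A" for c
    using that someI_ex[of "\<lambda>v. v \<noteq> 0 \<and> A *v v = c *\<^sub>R v"] unfolding eigenvalues_def ev_def by simp
  have orth: "ev c \<bullet> ev c' = 0" if "c \<in> eigenvalues A" "c' \<in> eigenvalues A" "c \<noteq> c'" for c c'
  proof -
    have "c * (ev c \<bullet> ev c') = ev c' \<bullet> (A *v ev c)" using evp[OF that(1)] by (simp add: inner_commute)
    also have "\<dots> = ev c \<bullet> (A *v ev c')" by (rule quad_sym[OF sym])
    also have "\<dots> = c' * (ev c \<bullet> ev c')" using evp[OF that(2)] by simp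
    finally show ?thesis using that(3) by simp
  qed
  have inj: "inj_on ev (eigenvalues A)"
  proof (rule inj_onI)
    fix c c' assume h: "c \<in> eigenvalues A" "c' \<in> eigenvalues A" "ev c = ev c'"
    show "c = c'"
    proof (rule ccontr)
      assume "c \<noteq> c'"
      then have "ev c \<bullet> ev c = 0" using orth[OF h(1,2)] h(3) by simp
      then show False using evp[OF h(1)] by simp
    qed
  qed
  have "pairwise orthogonal (ev ` eigenvalues A)"
    unfolding pairwise_def orthogonal_def using orth by auto
  moreover have "0 \<notin> ev ` eigenvalues A" using evp by auto
  ultimately have "independent (ev ` eigenvalues A)" by (rule pairwise_orthogonal_independent)
  then have "finite (ev ` eigenvalues A)" using independent_bound by blast
  then have fin: "finite (eigenvalues A)" using inj finite_imageD by blast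
  have "lambda_min A = m" unfolding lambda_min_def
    using fin meig ge by (intro Min_eqI) auto
  moreover have "\<forall>y. norm y = 1 \<longrightarrow> m \<le> y \<bullet> (A *v y)"
  proof (intro allI impI)
    fix y :: "real^'d" assume "norm y = 1"
    then show "m \<le> y \<bullet> (A *v y)" using hom[of y] by (simp add: q_def)
  qed
  ultimately show ?thesis using nv0 unfolding m_def q_def by blast
qed



lemma line_deriv:
  fixes f :: "real^'d::finite \<Rightarrow> real"
  assumes f: "\<And>y. (f has_derivative (\<lambda>h. G y \<bullet> h)) (at y)"
  shows "((\<lambda>a. f (p + a *\<^sub>R u)) has_real_derivative (G (p + a *\<^sub>R u) \<bullet> u)) (at a)"
proof -
  have l: "((\<lambda>a. p + a *\<^sub>R u) has_derivative (\<lambda>h. h *\<^sub>R u)) (at a)"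
    by (auto intro!: derivative_eq_intros)
  have "((f \<circ> (\<lambda>a. p + a *\<^sub>R u)) has_derivative ((\<lambda>h. G (p + a *\<^sub>R u) \<bullet> h) \<circ> (\<lambda>h. h *\<^sub>R u))) (at a)"
    by (rule diff_chain_at[OF l f])
  moreover have "((\<lambda>h. G (p + a *\<^sub>R u) \<bullet> h) \<circ> (\<lambda>h. h *\<^sub>R u)) = (*) (G (p + a *\<^sub>R u) \<bullet> u)"
    by (auto simp: fun_eq_iff)
  ultimately show ?thesis unfolding has_field_derivative_def by (simp add: o_def)
qed

lemma schwarz_one_side:
  fixes f :: "real^'d::finite \<Rightarrow> real" and G :: "real^'d \<Rightarrow> real^'d" and K :: "real^'d^'d"
  assumes f: "\<And>y. (f has_derivative (\<lambda>h. G y \<bullet> h)) (at y)"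
    and d: "\<And>z. norm z < \<delta> \<Longrightarrow> norm (G (x + z) - G x - K *v z) \<le> e * norm z"
    and t: "t > 0" "t * (norm u + norm v) < \<delta>" and e: "e \<ge> 0"
  shows "\<bar>f (x + t *\<^sub>R v + t *\<^sub>R u) - f (x + t *\<^sub>R u) - f (x + t *\<^sub>R v) + f x - t^2 * ((K *v v) \<bullet> u)\<bar>
         \<le> e * t^2 * ((2 * norm u + norm v) * norm u)"
proof -
  define \<psi> where "\<psi> = (\<lambda>a. f (x + t *\<^sub>R v + a *\<^sub>R u) - f (x + a *\<^sub>R u) - (t * ((K *v v) \<bullet> u)) * a)"
  define \<psi>' where "\<psi>' = (\<lambda>a. G (x + t *\<^sub>R v + a *\<^sub>R u) \<bullet> u - G (x + a *\<^sub>R u) \<bullet> u - t * ((K *v v) \<bullet> u))"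
  have der: "(\<psi> has_real_derivative \<psi>' a) (at a)" for a
    unfolding \<psi>_def \<psi>'_def
    by (intro derivative_intros line_deriv[OF f] DERIV_cmult_Id)
  obtain z where z: "0 < z" "z < t" and mv: "\<psi> t - \<psi> 0 = (t - 0) * \<psi>' z"
    using MVT2[OF t(1), of \<psi> \<psi>'] der by blast
  define z1 where "z1 = t *\<^sub>R v + z *\<^sub>R u"
  define z2 where "z2 = z *\<^sub>R u"
  have nz1: "norm z1 \<le> t * (norm u + norm v)"
  proof -
    have "norm z1 \<le> t * norm v + z * norm u" unfolding z1_def
      using norm_triangle_ineq[of "t *\<^sub>R v" "z *\<^sub>R u"] t z by simp
    also have "\<dots> \<le> t * (norm u + norm v)" using z by (simp add: algebra_simps mult_right_mono)
    finally show ?thesis .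
  qed
  have nz2: "norm z2 \<le> t * norm u" unfolding z2_def using z by (simp add: mult_right_mono)
  have "\<psi>' z = (G (x + z1) - G x - K *v z1) \<bullet> u - (G (x + z2) - G x - K *v z2) \<bullet> u"
    unfolding \<psi>'_def z1_def z2_def
    by (simp add: inner_diff_left matrix_vector_right_distrib matrix_vector_mult_scaleR add.assoc algebra_simps)
  then have "\<bar>\<psi>' z\<bar> \<le> norm (G (x + z1) - G x - K *v z1) * norm u + norm (G (x + z2) - G x - K *v z2) * norm u"
    by (smt (verit) Cauchy_Schwarz_ineq2)
  also have "\<dots> \<le> (e * norm z1) * norm u + (e * norm z2) * norm u"
  proof -
    have "norm z1 < \<delta>" using nz1 t by linarith
    moreover have "norm z2 < \<delta>" using nz2 t z
      by (smt (verit, best) mult_left_mono norm_ge_zero)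
    ultimately show ?thesis using d[of z1] d[of z2]
      by (intro add_mono mult_right_mono) auto
  qed
  also have "\<dots> \<le> e * (t * (norm u + norm v)) * norm u + e * (t * norm u) * norm u"
    using nz1 nz2 e by (intro add_mono mult_right_mono mult_left_mono) auto
  also have "\<dots> = e * t * ((2 * norm u + norm v) * norm u)" by (simp add: algebra_simps)
  finally have b: "\<bar>\<psi>' z\<bar> \<le> e * t * ((2 * norm u + norm v) * norm u)" .
  have "\<psi> t - \<psi> 0 = f (x + t *\<^sub>R v + t *\<^sub>R u) - f (x + t *\<^sub>R u) - f (x + t *\<^sub>R v) + f x - t^2 * ((K *v v) \<bullet> u)"
    unfolding \<psi>_def by (simp add: power2_eq_square)
  then have eq: "f (x + t *\<^sub>R v + t *\<^sub>R u) - f (x + t *\<^sub>R u) - f (x + t *\<^sub>R v) + f x - t^2 * ((K *v v) \<bullet> u) = t * \<psi>' z"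
    using mv by simp
  have "\<bar>f (x + t *\<^sub>R v + t *\<^sub>R u) - f (x + t *\<^sub>R u) - f (x + t *\<^sub>R v) + f x - t^2 * ((K *v v) \<bullet> u)\<bar> = t * \<bar>\<psi>' z\<bar>"
    unfolding eq using t by (simp add: abs_mult)
  also have "\<dots> \<le> t * (e * t * ((2 * norm u + norm v) * norm u))" using b t by (intro mult_left_mono) auto
  finally show ?thesis by (simp add: power2_eq_square algebra_simps)
qed



lemma schwarz:
  fixes f :: "real^'d::finite \<Rightarrow> real" and G :: "real^'d \<Rightarrow> real^'d" and K :: "real^'d^'d"
  assumes f: "\<And>y. (f has_derivative (\<lambda>h. G y \<bullet> h)) (at y)"
    and G: "(G has_derivative (\<lambda>h. K *v h)) (at x)"
  shows "(K *v v) \<bullet> u = (K *v u) \<bullet> v"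
proof -
  define D where "D = (K *v v) \<bullet> u - (K *v u) \<bullet> v"
  define C1 where "C1 = (2 * norm u + norm v) * norm u"
  define C2 where "C2 = (2 * norm v + norm u) * norm v"
  have C0: "C1 + C2 \<ge> 0" unfolding C1_def C2_def by simp
  have bound: "\<bar>D\<bar> \<le> e * (C1 + C2)" if e: "e > 0" for e
  proof -
    obtain \<delta> where \<delta>: "\<delta> > 0" "\<forall>y. norm (y - x) < \<delta> \<longrightarrow> norm (G y - G x - K *v (y - x)) \<le> e * norm (y - x)"
      using G[unfolded has_derivative_at_alt] e by blast
    have d: "norm (G (x+z) - G x - K *v z) \<le> e * norm z" if "norm z < \<delta>" for z
      using \<delta>(2)[rule_format, of "x + z"] that by simp
    define t where "t = \<delta> / (2 * (norm u + norm v + 1))"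
    have np: "norm u + norm v + 1 > 0" by (simp add: add_nonneg_pos)
    have t0: "t > 0" unfolding t_def using \<delta> np by simp
    have "t * (norm u + norm v) = \<delta> * ((norm u + norm v) / (2 * (norm u + norm v + 1)))"
      unfolding t_def by simp
    also have "\<dots> < \<delta> * 1"
      using np \<delta> by (intro mult_strict_left_mono) (auto simp: field_simps)
    finally have t1: "t * (norm u + norm v) < \<delta>" by simp
    then have t2: "t * (norm v + norm u) < \<delta>" by (simp add: add.commute)
    define A where "A = f (x + t *\<^sub>R v + t *\<^sub>R u) - f (x + t *\<^sub>R u) - f (x + t *\<^sub>R v) + f x"
    have A2: "A = f (x + t *\<^sub>R u + t *\<^sub>R v) - f (x + t *\<^sub>R v) - f (x + t *\<^sub>R u) + f x"
      unfolding A_def by (simp add: add_ac)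
    have b1: "\<bar>A - t^2 * ((K *v v) \<bullet> u)\<bar> \<le> e * t^2 * C1"
      using schwarz_one_side[OF f d t0 t1] e unfolding A_def C1_def by simp
    have b2: "\<bar>A - t^2 * ((K *v u) \<bullet> v)\<bar> \<le> e * t^2 * C2"
      using schwarz_one_side[OF f d t0 t2] e unfolding A2 C2_def by simp
    have "t^2 * \<bar>D\<bar> = \<bar>(A - t^2 * ((K *v u) \<bullet> v)) - (A - t^2 * ((K *v v) \<bullet> u))\<bar>"
    proof -
      have "(A - t^2 * ((K *v u) \<bullet> v)) - (A - t^2 * ((K *v v) \<bullet> u)) = t^2 * D"
        unfolding D_def by (simp add: algebra_simps)
      then show ?thesis by (simp add: abs_mult)
    qed
    also have "\<dots> \<le> e * t^2 * C1 + e * t^2 * C2" using b1 b2 by linarith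
    also have "\<dots> = t^2 * (e * (C1 + C2))" by (simp add: algebra_simps)
    finally show ?thesis using t0 by simp
  qed
  show ?thesis
  proof (rule ccontr)
    assume "\<not> ?thesis"
    then have Dp: "\<bar>D\<bar> > 0" unfolding D_def by simp
    define e where "e = \<bar>D\<bar> / (2 * (C1 + C2 + 1))"
    have e0: "e > 0" unfolding e_def using Dp C0 by simp
    have "\<bar>D\<bar> \<le> e * (C1 + C2)" by (rule bound[OF e0])
    also have "\<dots> = \<bar>D\<bar> * ((C1 + C2) / (2 * (C1 + C2 + 1)))" unfolding e_def by simp
    also have "\<dots> < \<bar>D\<bar> * 1"
      using Dp C0 by (intro mult_strict_left_mono) (auto simp: field_simps)
    finally show False by simp
  qed
qed

lemma hess_sym:
  fixes f :: "real^'d::finite \<Rightarrow> real" and G :: "real^'d \<Rightarrow> real^'d" and K :: "real^'d^'d"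
  assumes f: "\<And>y. (f has_derivative (\<lambda>h. G y \<bullet> h)) (at y)"
    and G: "(G has_derivative (\<lambda>h. K *v h)) (at x)"
  shows "K $ i $ j = K $ j $ i"
  using schwarz[OF f G, of "axis j 1" "axis i 1"]
  by (simp add: inner_axis' inner_axis matrix_vector_mul_component)



lemma t3_app1_axis: "t3_app1 T (axis c 1) $ a $ b = T $ a $ b $ c"
proof -
  have "(\<Sum>k\<in>UNIV. T $ a $ b $ k * (if k = c then 1 else 0)) = (\<Sum>k\<in>UNIV. if k = c then T $ a $ b $ k else 0)"
    by (rule sum.cong) auto
  then show ?thesis by (simp add: t3_app1_def axis_def)
qed

lemma sym_T1:
  fixes f :: "real^'d::finite \<Rightarrow> real"
  assumes d1: "\<And>x. (f has_derivative (\<lambda>h. g x \<bullet> h)) (at x)"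
    and d2: "\<And>x. (g has_derivative (\<lambda>h. H x *v h)) (at x)"
    and d3: "\<And>x. (H has_derivative (\<lambda>h. t3_app1 (T x) h)) (at x)"
  shows "T x $ a $ b $ c = T x $ b $ a $ c"
proof -
  have hs: "H y $ a $ b = H y $ b $ a" for y a b by (rule hess_sym[OF d1 d2])
  have c: "((\<lambda>y. H y $ a $ b) has_derivative (\<lambda>h. t3_app1 (T x) h $ a $ b)) (at x)" for a b
    by (rule bounded_linear.has_derivative[OF bounded_linear_vec_nth,
          OF bounded_linear.has_derivative[OF bounded_linear_vec_nth, OF d3]])
  have "(\<lambda>h. t3_app1 (T x) h $ a $ b) = (\<lambda>h. t3_app1 (T x) h $ b $ a)"
    using has_derivative_unique[OF c[of a b]] c[of b a] hs by (simp add: hs[of _ b a])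
  from fun_cong[OF this, of "axis c 1"] show ?thesis by (simp add: t3_app1_axis)
qed

lemma sym_T2:
  fixes f :: "real^'d::finite \<Rightarrow> real"
  assumes d1: "\<And>x. (f has_derivative (\<lambda>h. g x \<bullet> h)) (at x)"
    and d2: "\<And>x. (g has_derivative (\<lambda>h. H x *v h)) (at x)"
    and d3: "\<And>x. (H has_derivative (\<lambda>h. t3_app1 (T x) h)) (at x)"
  shows "T x $ a $ b $ c = T x $ a $ c $ b"
proof -
  have e1: "((\<lambda>y. g y $ a) has_derivative (\<lambda>h. (H y $ a) \<bullet> h)) (at y)" for y
    by (rule has_derivative_eq_rhs[OF bounded_linear.has_derivative[OF bounded_linear_vec_nth, OF d2]])
       (simp add: fun_eq_iff matrix_vector_mul_component)
  have e2: "((\<lambda>y. H y $ a) has_derivative (\<lambda>h. (T x $ a) *v h)) (at x)"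
    by (rule has_derivative_eq_rhs[OF bounded_linear.has_derivative[OF bounded_linear_vec_nth, OF d3]])
       (simp add: fun_eq_iff vec_eq_iff t3_app1_def matrix_vector_mult_def)
  show ?thesis using hess_sym[OF e1 e2, of b c] by simp
qed

lemma sym_T_cyc:
  fixes f :: "real^'d::finite \<Rightarrow> real"
  assumes d1: "\<And>x. (f has_derivative (\<lambda>h. g x \<bullet> h)) (at x)"
    and d2: "\<And>x. (g has_derivative (\<lambda>h. H x *v h)) (at x)"
    and d3: "\<And>x. (H has_derivative (\<lambda>h. t3_app1 (T x) h)) (at x)"
  shows "T x $ a $ b $ c = T x $ c $ a $ b"
  using sym_T1[OF d1 d2 d3, of x c a b] sym_T2[OF d1 d2 d3, of x a c b] by simp



definition tri :: "'d::finite tensor3 \<Rightarrow> real^'d \<Rightarrow> real^'d \<Rightarrow> real^'d \<Rightarrow> real" where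
  "tri D h1 h2 h3 = (\<Sum>i\<in>UNIV. \<Sum>j\<in>UNIV. \<Sum>k\<in>UNIV. D$i$j$k * h1$i * h2$j * h3$k)"

lemma tri_scale: "tri D (a *\<^sub>R h1) (b *\<^sub>R h2) (c *\<^sub>R h3) = a * b * c * tri D h1 h2 h3"
  by (simp add: tri_def sum_distrib_left mult_ac)

lemma tri_bdd: "bdd_above {\<bar>tri D h1 h2 h3\<bar> | h1 h2 h3. norm h1 = 1 \<and> norm h2 = 1 \<and> norm h3 = 1}"
proof (rule bdd_aboveI)
  fix r assume "r \<in> {\<bar>tri D h1 h2 h3\<bar> | h1 h2 h3. norm h1 = 1 \<and> norm h2 = 1 \<and> norm h3 = 1}"
  then obtain h1 h2 h3 where h: "norm h1 = 1" "norm h2 = 1" "norm h3 = 1" and r: "r = \<bar>tri D h1 h2 h3\<bar>" by blast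
  have "r \<le> (\<Sum>i\<in>UNIV. \<Sum>j\<in>UNIV. \<Sum>k\<in>UNIV. \<bar>D$i$j$k * h1$i * h2$j * h3$k\<bar>)"
    unfolding r tri_def
    by (rule order_trans[OF sum_abs], rule sum_mono, rule order_trans[OF sum_abs], rule sum_mono, rule sum_abs)
  also have "\<dots> \<le> (\<Sum>i\<in>UNIV. \<Sum>j\<in>UNIV. \<Sum>k\<in>UNIV. \<bar>D$i$j$k\<bar>)"
  proof (intro sum_mono)
    fix i j k
    have a1: "\<bar>h1$i\<bar> \<le> 1" using component_le_norm_cart[of h1 i] h by simp
    have a2: "\<bar>h2$j\<bar> \<le> 1" using component_le_norm_cart[of h2 j] h by simp
    have a3: "\<bar>h3$k\<bar> \<le> 1" using component_le_norm_cart[of h3 k] h by simp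
    have "\<bar>h1$i\<bar> * \<bar>h2$j\<bar> * \<bar>h3$k\<bar> \<le> 1 * 1 * 1"
      using a1 a2 a3 by (intro mult_mono) auto
    then have "\<bar>D$i$j$k\<bar> * (\<bar>h1$i\<bar> * \<bar>h2$j\<bar> * \<bar>h3$k\<bar>) \<le> \<bar>D$i$j$k\<bar> * 1"
      by (intro mult_left_mono) auto
    then show "\<bar>D$i$j$k * h1$i * h2$j * h3$k\<bar> \<le> \<bar>D$i$j$k\<bar>" by (simp add: abs_mult mult_ac)
  qed
  finally show "r \<le> (\<Sum>i\<in>UNIV. \<Sum>j\<in>UNIV. \<Sum>k\<in>UNIV. \<bar>D$i$j$k\<bar>)" .
qed

lemma tnorm3_eq: "tnorm3 D = Sup {\<bar>tri D h1 h2 h3\<bar> | h1 h2 h3. norm h1 = 1 \<and> norm h2 = 1 \<and> norm h3 = 1}"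
  unfolding tnorm3_def tri_def ..

lemma tri_le_unit: "norm h1 = 1 \<Longrightarrow> norm h2 = 1 \<Longrightarrow> norm h3 = 1 \<Longrightarrow> \<bar>tri D h1 h2 h3\<bar> \<le> tnorm3 D"
  unfolding tnorm3_eq by (rule cSup_upper[OF _ tri_bdd]) blast

lemma tnorm3_nonneg: "tnorm3 (D::'d::finite tensor3) \<ge> 0"
proof -
  have n: "norm (axis undefined 1 :: real^'d) = 1" by (simp add: norm_axis_1)
  show ?thesis using tri_le_unit[OF n n n, of D] by linarith
qed

lemma tri_le: "\<bar>tri D h1 h2 h3\<bar> \<le> tnorm3 D * norm h1 * norm h2 * norm h3"
proof (cases "h1 = 0 \<or> h2 = 0 \<or> h3 = 0")
  case True
  then have "tri D h1 h2 h3 = 0" by (auto simp: tri_def)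
  then show ?thesis using tnorm3_nonneg[of D] by simp
next
  case False
  then have p: "norm h1 > 0" "norm h2 > 0" "norm h3 > 0" by auto
  have "\<bar>tri D (h1 /\<^sub>R norm h1) (h2 /\<^sub>R norm h2) (h3 /\<^sub>R norm h3)\<bar> \<le> tnorm3 D"
    using p by (intro tri_le_unit) auto
  also have "tri D (h1 /\<^sub>R norm h1) (h2 /\<^sub>R norm h2) (h3 /\<^sub>R norm h3)
      = tri D h1 h2 h3 / (norm h1 * norm h2 * norm h3)"
    by (simp add: tri_scale field_simps)
  finally have "\<bar>tri D h1 h2 h3\<bar> / (norm h1 * norm h2 * norm h3) \<le> tnorm3 D"
    using p by (simp add: abs_divide)
  then show ?thesis using p by (simp add: field_simps mult_ac)
qed



lemma t3_app1_scale: "t3_app1 T (c *\<^sub>R s) = c *\<^sub>R t3_app1 T s"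
  by (simp add: t3_app1_def vec_eq_iff sum_distrib_left mult_ac)

lemma t3_app1_diff: "t3_app1 (A - B) s = t3_app1 A s - t3_app1 B s"
  by (simp add: t3_app1_def vec_eq_iff sum_subtractf algebra_simps)

lemma q_tri: "y \<bullet> (t3_app1 D s *v y) = tri D y y s"
  by (simp add: t3_app1_def tri_def inner_vec_def matrix_vector_mult_def sum_distrib_left sum_distrib_right mult_ac)

lemma q_scale: "y \<bullet> ((c *\<^sub>R M) *v y) = c * (y \<bullet> (M *v y))" for y :: "real^'d::finite"
  by (simp add: matrix_vector_mult_def inner_vec_def sum_distrib_left mult_ac inner_real_def)

lemma q_add: "y \<bullet> ((A + B) *v y) = y \<bullet> (A *v y) + y \<bullet> (B *v y)" for y :: "real^'d::finite"
  by (simp add: matrix_vector_mult_def inner_vec_def sum.distrib algebra_simps)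

lemma bl_q: "bounded_linear (\<lambda>M::real^'d::finite^'d. y \<bullet> (M *v y))"
proof -
  have "linear (\<lambda>M::real^'d::finite^'d. y \<bullet> (M *v y))"
    by (rule linearI) (simp_all add: q_add q_scale)
  then show ?thesis by (simp add: linear_conv_bounded_linear)
qed

lemma taylor_hess:
  fixes H :: "real^'d::finite \<Rightarrow> real^'d^'d"
  assumes d3: "\<And>x. (H has_derivative (\<lambda>h. t3_app1 (T x) h)) (at x)"
    and lip: "\<And>x y. tnorm3 (T x - T y) \<le> L * norm (x - y)"
  shows "y \<bullet> (H (x + s) *v y) \<ge> y \<bullet> (H x *v y) + y \<bullet> (t3_app1 (T x) s *v y) - L/2 * (norm s)^2 * (norm y)^2"
proof -
  define q where "q = (\<lambda>M::real^'d^'d. y \<bullet> (M *v y))"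
  have blq: "bounded_linear q" unfolding q_def by (rule bl_q)
  define \<phi>' where "\<phi>' = (\<lambda>t. q (t3_app1 (T (x + t *\<^sub>R s)) s))"
  have dphi: "((\<lambda>t. q (H (x + t *\<^sub>R s))) has_real_derivative \<phi>' t) (at t)" for t
  proof -
    have l: "((\<lambda>t. x + t *\<^sub>R s) has_derivative (\<lambda>h. h *\<^sub>R s)) (at t)"
      by (auto intro!: derivative_eq_intros)
    have "((\<lambda>t. H (x + t *\<^sub>R s)) has_derivative (\<lambda>h. t3_app1 (T (x + t *\<^sub>R s)) (h *\<^sub>R s))) (at t)"
      by (rule has_derivative_compose[OF l d3])
    from bounded_linear.has_derivative[OF blq this]
    have "((\<lambda>t. q (H (x + t *\<^sub>R s))) has_derivative (\<lambda>h. q (t3_app1 (T (x + t *\<^sub>R s)) (h *\<^sub>R s)))) (at t)" .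
    moreover have "(\<lambda>h. q (t3_app1 (T (x + t *\<^sub>R s)) (h *\<^sub>R s))) = (*) (\<phi>' t)"
      by (simp add: fun_eq_iff t3_app1_scale \<phi>'_def q_def q_scale)
    ultimately show ?thesis unfolding has_field_derivative_def by simp
  qed
  define c where "c = L * (norm s)^2 * (norm y)^2"
  define \<psi> where "\<psi> = (\<lambda>t. q (H (x + t *\<^sub>R s)) - t * \<phi>' 0 + c/2 * t^2)"
  define \<psi>' where "\<psi>' = (\<lambda>t. \<phi>' t - \<phi>' 0 + c * t)"
  have dpsi: "(\<psi> has_real_derivative \<psi>' t) (at t)" for t
    unfolding \<psi>_def \<psi>'_def
    by (rule derivative_eq_intros dphi refl | simp)+
  obtain z where z: "0 < z" "z < 1" and mv: "\<psi> 1 - \<psi> 0 = (1 - 0) * \<psi>' z"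
    using MVT2[of 0 1 \<psi> \<psi>'] dpsi by auto
  have "\<bar>\<phi>' z - \<phi>' 0\<bar> = \<bar>tri (T (x + z *\<^sub>R s) - T x) y y s\<bar>"
    unfolding \<phi>'_def q_def by (simp add: q_tri[symmetric] t3_app1_diff inner_diff_right matrix_vector_mult_diff_rdistrib)
  also have "\<dots> \<le> tnorm3 (T (x + z *\<^sub>R s) - T x) * norm y * norm y * norm s" by (rule tri_le)
  also have "\<dots> \<le> (L * norm (x + z *\<^sub>R s - x)) * norm y * norm y * norm s"
    by (intro mult_right_mono lip) auto
  also have "\<dots> = c * z" unfolding c_def using z by (simp add: power2_eq_square mult_ac)
  finally have "\<psi>' z \<ge> 0" unfolding \<psi>'_def by linarith
  then have "\<psi> 1 \<ge> \<psi> 0" using mv by simp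
  then have "q (H (x + s)) \<ge> q (H x) + \<phi>' 0 - c/2" unfolding \<psi>_def by simp
  then show ?thesis unfolding q_def \<phi>'_def c_def by simp
qed



lemma q_zero: "y \<bullet> ((0::real^'d::finite^'d) *v y) = 0"
  by (simp add: matrix_vector_mult_def inner_vec_def)

lemma q_sum: "finite S \<Longrightarrow> y \<bullet> ((\<Sum>i\<in>S. A i) *v y) = (\<Sum>i\<in>S. y \<bullet> (A i *v y))" for y :: "real^'d::finite"
  by (induction S rule: finite_induct) (simp_all add: q_zero q_add)

lemma q_avg: "finite S \<Longrightarrow> y \<bullet> ((c *\<^sub>R (\<Sum>i\<in>S. A i)) *v y) = c * (\<Sum>i\<in>S. y \<bullet> (A i *v y))" for y :: "real^'d::finite"
  by (simp add: q_scale q_sum)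

lemma tri_add: "tri (A + B) h1 h2 h3 = tri A h1 h2 h3 + tri B h1 h2 h3"
  by (simp add: tri_def sum.distrib algebra_simps)

lemma tri_zero: "tri 0 h1 h2 h3 = 0"
  by (simp add: tri_def)

lemma tri_scaleD: "tri (c *\<^sub>R A) h1 h2 h3 = c * tri A h1 h2 h3"
  by (simp add: tri_def sum_distrib_left mult_ac)

lemma tri_sum: "finite S \<Longrightarrow> tri (\<Sum>i\<in>S. A i) h1 h2 h3 = (\<Sum>i\<in>S. tri (A i) h1 h2 h3)"
  by (induction S rule: finite_induct) (simp_all add: tri_zero tri_add)

lemma tri_avg: "finite S \<Longrightarrow> tri (c *\<^sub>R (\<Sum>i\<in>S. A i)) h1 h2 h3 = c * (\<Sum>i\<in>S. tri (A i) h1 h2 h3)"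
  by (simp add: tri_scaleD tri_sum)

lemma tri_cyc:
  assumes cyc: "\<And>a b c. D $ a $ b $ c = D $ c $ a $ b"
  shows "tri D y y s = s \<bullet> t3_app2 D y"
proof -
  have "tri D y y s = (\<Sum>i\<in>UNIV. \<Sum>j\<in>UNIV. \<Sum>k\<in>UNIV. D$k$i$j * y$i * y$j * s$k)"
    unfolding tri_def by (simp add: cyc[of _ _ "_"])
  also have "\<dots> = (\<Sum>i\<in>UNIV. \<Sum>k\<in>UNIV. \<Sum>j\<in>UNIV. D$k$i$j * y$i * y$j * s$k)"
    by (rule sum.cong[OF refl], rule sum.swap)
  also have "\<dots> = (\<Sum>k\<in>UNIV. \<Sum>i\<in>UNIV. \<Sum>j\<in>UNIV. D$k$i$j * y$i * y$j * s$k)"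
    by (rule sum.swap)
  also have "\<dots> = s \<bullet> t3_app2 D y"
    by (simp add: t3_app2_def inner_vec_def sum_distrib_left mult_ac)
  finally show ?thesis .
qed

lemma avg_sym2:
  assumes "\<And>i a b. i \<in> S \<Longrightarrow> (A i :: real^'d::finite^'d) $ a $ b = A i $ b $ a"
  shows "(c *\<^sub>R (\<Sum>i\<in>S. A i)) $ a $ b = (c *\<^sub>R (\<Sum>i\<in>S. A i)) $ b $ a"
  using assms by (simp cong: sum.cong)

lemma avg_cyc:
  assumes "\<And>i a b d. i \<in> S \<Longrightarrow> (T i :: 'd::finite tensor3) $ a $ b $ d = T i $ d $ a $ b"
  shows "(c *\<^sub>R (\<Sum>i\<in>S. T i)) $ a $ b $ d = (c *\<^sub>R (\<Sum>i\<in>S. T i)) $ d $ a $ b"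
  using assms by (simp cong: sum.cong)

lemma avg_swap12:
  assumes "\<And>i a b d. i \<in> S \<Longrightarrow> (T i :: 'd::finite tensor3) $ a $ b $ d = T i $ b $ a $ d"
  shows "(c *\<^sub>R (\<Sum>i\<in>S. T i)) $ a $ b $ d = (c *\<^sub>R (\<Sum>i\<in>S. T i)) $ b $ a $ d"
  using assms by (simp cong: sum.cong)

lemma outer_q: "y \<bullet> (outer s s *v y) = (s \<bullet> y)^2" for y :: "real^'d::finite"
proof -
  have "outer s s *v y = (s \<bullet> y) *\<^sub>R s"
    by (simp add: outer_def matrix_vector_mult_def vec_eq_iff inner_vec_def sum_distrib_left mult_ac)
  then show ?thesis by (simp add: power2_eq_square inner_commute)
qed

lemma mat1_q: "y \<bullet> (mat 1 *v y) = (norm y)^2" for y :: "real^'d::finite"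
  by (simp add: power2_norm_eq_inner)

lemma model_hess_q:
  fixes y :: "real^'d::finite"
  shows "y \<bullet> (model_hess B T \<sigma> s *v y) = y \<bullet> (B *v y) + tri T y y s + \<sigma> * ((norm s)^2 * (norm y)^2 + 2 * (s \<bullet> y)^2)"
  unfolding model_hess_def
  by (simp add: q_add q_scale q_tri outer_q mat1_q power2_norm_eq_inner)

lemma model_hess_sym:
  fixes B :: "real^'d::finite^'d"
  assumes B: "\<And>a b. B $ a $ b = B $ b $ a" and T: "\<And>a b c. T $ a $ b $ c = T $ b $ a $ c"
  shows "model_hess B T \<sigma> s $ a $ b = model_hess B T \<sigma> s $ b $ a"
  unfolding model_hess_def using B T
  by (simp add: t3_app1_def outer_def mat_def mult.commute)


theorem lemma3:
  fixes n :: nat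
    and fs :: "nat \<Rightarrow> real^'d::finite \<Rightarrow> real"
    and gs :: "nat \<Rightarrow> real^'d \<Rightarrow> real^'d"
    and Hs :: "nat \<Rightarrow> real^'d \<Rightarrow> real^'d^'d"
    and Ts :: "nat \<Rightarrow> real^'d \<Rightarrow> 'd tensor3"
    and Lf Lg Lb Lt :: real
    and Sg Sb St :: "nat set"
    and xk sk :: "real^'d"
    and \<sigma>k \<epsilon> \<theta> \<zeta> :: real
  assumes n_pos: "n \<ge> 1"
    and d1: "\<And>i x. i \<in> {1..n} \<Longrightarrow> (fs i has_derivative (\<lambda>h. gs i x \<bullet> h)) (at x)"
    and d2: "\<And>i x. i \<in> {1..n} \<Longrightarrow> (gs i has_derivative (\<lambda>h. Hs i x *v h)) (at x)"
    and d3: "\<And>i x. i \<in> {1..n} \<Longrightarrow> (Hs i has_derivative (\<lambda>h. t3_app1 (Ts i x) h)) (at x)"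
    and lip_f: "\<And>i x y. i \<in> {1..n} \<Longrightarrow> \<bar>fs i x - fs i y\<bar> \<le> Lf * norm (x - y)"
    and lip_g: "\<And>i x y. i \<in> {1..n} \<Longrightarrow> norm (gs i x - gs i y) \<le> Lg * norm (x - y)"
    and lip_b: "\<And>i x y. i \<in> {1..n} \<Longrightarrow> tnorm2 (Hs i x - Hs i y) \<le> Lb * norm (x - y)"
    and lip_t: "\<And>i x y. i \<in> {1..n} \<Longrightarrow> tnorm3 (Ts i x - Ts i y) \<le> Lt * norm (x - y)"
    and Sg: "Sg \<subseteq> {1..n}" and Sb: "Sb \<subseteq> {1..n}" and St: "St \<subseteq> {1..n}"
    and \<sigma>_pos: "\<sigma>k > 0" and \<epsilon>_pos: "\<epsilon> > 0" and \<theta>_pos: "\<theta> > 0" and \<zeta>_pos: "\<zeta> > 0"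
    and samp_g: "norm ((1 / real (card Sg)) *\<^sub>R (\<Sum>i\<in>Sg. gs i xk)
                   - (1 / real n) *\<^sub>R (\<Sum>i=1..n. gs i xk)) \<le> (1/4) * \<epsilon>"
    and samp_b: "\<And>s. norm (((1 / real (card Sb)) *\<^sub>R (\<Sum>i\<in>Sb. Hs i xk)
                   - (1 / real n) *\<^sub>R (\<Sum>i=1..n. Hs i xk)) *v s)
                   \<le> (1/4) * \<epsilon> powr (2/3) * norm s"
    and samp_t: "\<And>s. norm (t3_app2 ((1 / real (card St)) *\<^sub>R (\<Sum>i\<in>St. Ts i xk)) s
                   - t3_app2 ((1 / real n) *\<^sub>R (\<Sum>i=1..n. Ts i xk)) s)
                   \<le> (1/2) * \<epsilon> powr (1/3) * norm s ^ 2"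
    and dec: "model ((1 / real n) * (\<Sum>i=1..n. fs i xk))
                    ((1 / real (card Sg)) *\<^sub>R (\<Sum>i\<in>Sg. gs i xk))
                    ((1 / real (card Sb)) *\<^sub>R (\<Sum>i\<in>Sb. Hs i xk))
                    ((1 / real (card St)) *\<^sub>R (\<Sum>i\<in>St. Ts i xk)) \<sigma>k sk
              < model ((1 / real n) * (\<Sum>i=1..n. fs i xk))
                    ((1 / real (card Sg)) *\<^sub>R (\<Sum>i\<in>Sg. gs i xk))
                    ((1 / real (card Sb)) *\<^sub>R (\<Sum>i\<in>Sb. Hs i xk))
                    ((1 / real (card St)) *\<^sub>R (\<Sum>i\<in>St. Ts i xk)) \<sigma>k 0"
    and am1: "chi_m1 ((1 / real (card Sg)) *\<^sub>R (\<Sum>i\<in>Sg. gs i xk))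
                     ((1 / real (card Sb)) *\<^sub>R (\<Sum>i\<in>Sb. Hs i xk))
                     ((1 / real (card St)) *\<^sub>R (\<Sum>i\<in>St. Ts i xk)) \<sigma>k sk
              \<le> \<theta> * norm sk ^ 3"
    and am2: "chi_m2 ((1 / real (card Sb)) *\<^sub>R (\<Sum>i\<in>Sb. Hs i xk))
                     ((1 / real (card St)) *\<^sub>R (\<Sum>i\<in>St. Ts i xk)) \<sigma>k sk
              \<le> \<theta> * norm sk ^ 2"
    and am3: "chi_m3 ((1 / real (card Sb)) *\<^sub>R (\<Sum>i\<in>Sb. Hs i xk))
                     ((1 / real (card St)) *\<^sub>R (\<Sum>i\<in>St. Ts i xk)) \<sigma>k \<zeta> sk
              \<le> \<theta> * norm sk"
  shows "norm sk \<ge>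
           (let \<epsilon>2 = \<epsilon> powr (2/3);
                \<kappa> = 3 * \<sigma>k + Lt / 2 + \<theta> + 1/4;
                c = chi2 ((1 / real n) *\<^sub>R (\<Sum>i=1..n. Hs i (xk + sk)))
            in if c < \<epsilon>2 / 2 then 0
               else \<kappa> powr (-1/2) * (c - \<epsilon>2 / 2) powr (1/2))"
proof -
  define gk where "gk = (1 / real (card Sg)) *\<^sub>R (\<Sum>i\<in>Sg. gs i xk)"
  define Bk where "Bk = (1 / real (card Sb)) *\<^sub>R (\<Sum>i\<in>Sb. Hs i xk)"
  define Tk where "Tk = (1 / real (card St)) *\<^sub>R (\<Sum>i\<in>St. Ts i xk)"
  define Hb where "Hb = (\<lambda>z. (1 / real n) *\<^sub>R (\<Sum>i=1..n. Hs i z))"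
  define Tb where "Tb = (1 / real n) *\<^sub>R (\<Sum>i=1..n. Ts i xk)"
  define M where "M = model_hess Bk Tk \<sigma>k sk"
  define e2 where "e2 = \<epsilon> powr (2/3)"
  define \<kappa> where "\<kappa> = 3 * \<sigma>k + Lt / 2 + \<theta> + 1/4"
  define ns where "ns = norm sk"
  have finS: "finite Sb" "finite St" using Sb St finite_subset by blast+
  have Hsym: "Hs i z $ a $ b = Hs i z $ b $ a" if "i \<in> {1..n}" for i z a b
    by (rule hess_sym[OF d1[OF that] d2[OF that]])
  have Tcyc: "Ts i z $ a $ b $ c = Ts i z $ c $ a $ b" if "i \<in> {1..n}" for i z a b c
    by (rule sym_T_cyc[OF d1[OF that] d2[OF that] d3[OF that]])
  have Tsw: "Ts i z $ a $ b $ c = Ts i z $ b $ a $ c" if "i \<in> {1..n}" for i z a b c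
    by (rule sym_T1[OF d1[OF that] d2[OF that] d3[OF that]])
  have Bsym: "Bk $ a $ b = Bk $ b $ a" for a b
    unfolding Bk_def by (rule avg_sym2) (use Hsym Sb in blast)
  have Tksw: "Tk $ a $ b $ c = Tk $ b $ a $ c" for a b c
    unfolding Tk_def by (rule avg_swap12) (use Tsw St in blast)
  have Tkcyc: "Tk $ a $ b $ c = Tk $ c $ a $ b" for a b c
    unfolding Tk_def by (rule avg_cyc) (use Tcyc St in blast)
  have Tbcyc: "Tb $ a $ b $ c = Tb $ c $ a $ b" for a b c
    unfolding Tb_def by (rule avg_cyc) (use Tcyc in blast)
  have Hbsym: "Hb z $ a $ b = Hb z $ b $ a" for z a b
    unfolding Hb_def by (rule avg_sym2) (use Hsym in blast)
  have Msym: "M $ a $ b = M $ b $ a" for a b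
    unfolding M_def by (rule model_hess_sym[OF Bsym Tksw])
  have Lt0: "Lt \<ge> 0"
  proof -
    have i1: "1 \<in> {1..n}" using n_pos by simp
    have "0 \<le> tnorm3 (Ts 1 0 - Ts 1 (axis undefined 1))" by (rule tnorm3_nonneg)
    also have "\<dots> \<le> Lt * norm (0 - (axis undefined 1 :: real^'d))" by (rule lip_t[OF i1])
    finally show ?thesis by (simp add: norm_axis_1)
  qed
  have \<kappa>0: "\<kappa> > 0" unfolding \<kappa>_def using \<sigma>_pos \<theta>_pos Lt0 by simp
  have e20: "e2 \<ge> 0" unfolding e2_def by simp
  have key: "y \<bullet> (Hb (xk + sk) *v y) \<ge> - (\<kappa> * ns^2 + e2 / 2)" if y: "norm y = 1" for y
  proof -
    obtain mM where mM: "lambda_min M = mM" "\<forall>y. norm y = 1 \<longrightarrow> mM \<le> y \<bullet> (M *v y)"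
      using lmin_sym[OF Msym] by blast
    have "chi2 M \<le> \<theta> * ns^2" using am2 unfolding chi_m2_def M_def Bk_def Tk_def ns_def .
    then have "- mM \<le> \<theta> * ns^2" unfolding chi2_def mM(1) by simp
    then have qM: "y \<bullet> (M *v y) \<ge> - \<theta> * ns^2" using mM(2) y by force
    have sy: "(sk \<bullet> y)^2 \<le> ns^2"
    proof -
      have "\<bar>sk \<bullet> y\<bar> \<le> ns * 1" using Cauchy_Schwarz_ineq2[of sk y] y unfolding ns_def by simp
      then show ?thesis by (metis abs_ge_zero mult.right_neutral power2_abs power_mono)
    qed
    have qM2: "y \<bullet> (M *v y) = y \<bullet> (Bk *v y) + tri Tk y y sk + \<sigma>k * (ns^2 + 2 * (sk \<bullet> y)^2)"
      unfolding M_def model_hess_q using y ns_def by simp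
    have A1: "y \<bullet> (Bk *v y) + tri Tk y y sk \<ge> - \<theta> * ns^2 - 3 * \<sigma>k * ns^2"
    proof -
      have "\<sigma>k * (ns^2 + 2 * (sk \<bullet> y)^2) \<le> \<sigma>k * (3 * ns^2)"
        using sy \<sigma>_pos by (intro mult_left_mono) auto
      then show ?thesis using qM qM2 by linarith
    qed
    have A2: "y \<bullet> (Hb xk *v y) \<ge> y \<bullet> (Bk *v y) - e2 / 4"
    proof -
      have "\<bar>y \<bullet> ((Bk - Hb xk) *v y)\<bar> \<le> norm y * norm ((Bk - Hb xk) *v y)" by (rule Cauchy_Schwarz_ineq2)
      also have "\<dots> \<le> 1 * ((1/4) * e2 * 1)" using samp_b[of y] y unfolding Bk_def Hb_def e2_def by simp
      finally have "\<bar>y \<bullet> (Bk *v y) - y \<bullet> (Hb xk *v y)\<bar> \<le> e2 / 4"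
        by (simp add: matrix_vector_mult_diff_rdistrib inner_diff_right)
      then show ?thesis by linarith
    qed
    have A3: "tri Tb y y sk \<ge> tri Tk y y sk - e2/4 - ns^2/4"
    proof -
      have "tri Tk y y sk - tri Tb y y sk = sk \<bullet> (t3_app2 Tk y - t3_app2 Tb y)"
        by (simp add: tri_cyc[OF Tkcyc] tri_cyc[OF Tbcyc] inner_diff_right)
      also have "\<dots> \<le> ns * norm (t3_app2 Tk y - t3_app2 Tb y)"
        unfolding ns_def by (rule order_trans[OF _ Cauchy_Schwarz_ineq2]) simp
      also have "\<dots> \<le> ns * ((1/2) * \<epsilon> powr (1/3) * 1)"
        using samp_t[of y] y unfolding Tk_def Tb_def ns_def by (intro mult_left_mono) auto
      also have "\<dots> \<le> e2/4 + ns^2/4"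
      proof -
        have pp: "\<epsilon> powr (1/3) * \<epsilon> powr (1/3) = e2"
          unfolding e2_def by (simp add: powr_add[symmetric])
        have "0 \<le> (\<epsilon> powr (1/3) - ns)^2" by simp
        then show ?thesis using pp by (simp add: power2_eq_square algebra_simps)
      qed
      finally show ?thesis by simp
    qed
    have A4: "y \<bullet> (Hb (xk + sk) *v y) \<ge> y \<bullet> (Hb xk *v y) + tri Tb y y sk - Lt/2 * ns^2"
    proof -
      have ti: "y \<bullet> (Hs i (xk + sk) *v y) \<ge> y \<bullet> (Hs i xk *v y) + tri (Ts i xk) y y sk - Lt/2 * ns^2"
        if i: "i \<in> {1..n}" for i
        using taylor_hess[OF d3[OF i] lip_t[OF i], of y xk sk] y unfolding ns_def by (simp add: q_tri)
      have "(\<Sum>i=1..n. y \<bullet> (Hs i xk *v y) + tri (Ts i xk) y y sk - Lt/2 * ns^2)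
            \<le> (\<Sum>i=1..n. y \<bullet> (Hs i (xk + sk) *v y))"
        by (rule sum_mono) (rule ti, simp)
      then have "(\<Sum>i=1..n. y \<bullet> (Hs i xk *v y)) + (\<Sum>i=1..n. tri (Ts i xk) y y sk) - real n * (Lt/2 * ns^2)
            \<le> (\<Sum>i=1..n. y \<bullet> (Hs i (xk + sk) *v y))"
        by (simp add: sum.distrib sum_subtractf)
      then have "(1 / real n) * ((\<Sum>i=1..n. y \<bullet> (Hs i xk *v y)) + (\<Sum>i=1..n. tri (Ts i xk) y y sk) - real n * (Lt/2 * ns^2))
            \<le> (1 / real n) * (\<Sum>i=1..n. y \<bullet> (Hs i (xk + sk) *v y))"
        by (intro mult_left_mono) auto
      moreover have "real n > 0" using n_pos by simp
      ultimately show ?thesis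
        unfolding Hb_def Tb_def by (simp add: q_avg tri_avg field_simps)
    qed
    show ?thesis using A1 A2 A3 A4 unfolding \<kappa>_def by (simp add: algebra_simps)
  qed
  obtain mH where mH: "lambda_min (Hb (xk + sk)) = mH" "\<exists>y. norm y = 1 \<and> y \<bullet> (Hb (xk + sk) *v y) = mH"
    using lmin_sym[OF Hbsym] by blast
  have mHb: "mH \<ge> - (\<kappa> * ns^2 + e2 / 2)" using mH(2) key by force
  define c where "c = chi2 (Hb (xk + sk))"
  have kn0: "\<kappa> * ns^2 \<ge> 0" using \<kappa>0 by simp
  have cb: "c - e2/2 \<le> \<kappa> * ns^2" unfolding c_def chi2_def mH(1) using mHb e20 kn0 by (simp add: max_def)
  have main: "\<kappa> powr (-1/2) * (c - e2 / 2) powr (1/2) \<le> ns" if ge: "\<not> c < e2 / 2"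
  proof -
    have a0: "c - e2/2 \<ge> 0" using ge by simp
    have "(c - e2 / 2) powr (1/2) = sqrt (c - e2/2)" using a0 by (simp add: powr_half_sqrt)
    also have "\<dots> \<le> sqrt (\<kappa> * ns^2)" using cb by simp
    also have "\<dots> = sqrt \<kappa> * ns" unfolding ns_def by (simp add: real_sqrt_mult)
    finally have h1: "(c - e2 / 2) powr (1/2) \<le> sqrt \<kappa> * ns" .
    have h2: "\<kappa> powr (-1/2) = 1 / sqrt \<kappa>"
    proof -
      have "\<kappa> powr (-1/2) = \<kappa> powr (- (1/2))" by simp
      also have "\<dots> = inverse (\<kappa> powr (1/2))" by (rule powr_minus)
      finally have "\<kappa> powr (-1/2) = inverse (\<kappa> powr (1/2))" .
      then show ?thesis using \<kappa>0 powr_half_sqrt[of \<kappa>] by (simp add: inverse_eq_divide)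
    qed
    have sk0: "sqrt \<kappa> > 0" using \<kappa>0 by simp
    have "\<kappa> powr (-1/2) * (c - e2 / 2) powr (1/2) \<le> (1 / sqrt \<kappa>) * (sqrt \<kappa> * ns)"
      unfolding h2 using h1 sk0 by (intro mult_left_mono) auto
    also have "\<dots> = ns" using sk0 by simp
    finally show ?thesis .
  qed
  show ?thesis
    unfolding Let_def
    using main unfolding c_def Hb_def e2_def \<kappa>_def ns_def by auto
qed

end
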